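(* Assume Martin's Axiom. Then there exists a very mad family, and every very mad family has cardinality $2^{\aleph_0}$.
   Context: Functions $f \in \mathbb{N}^{\mathbb{N}}$ are identified with their graphs. Two functions $g_0,g_1 \in \mathbb{N}^{\mathbb{N}}$ are almost disjoint if $\{n : g_0(n)=g_1(n)\}$ is finite; $\mathcal{A}\subseteq\mathbb{N}^{\mathbb{N}}$ is an almost disjoint family of functions if any two distinct members are almost disjoint. A function $f$ is finitely covered by $\mathcal{A}$ if there are $g_0,\dots,g_n \in \mathcal{A}$ with $\{k : f(k)\notin\{g_0(k),\dots,g_n(k)\}\}$ finite; a family $F$ is finitely covered by $\mathcal{A}$ if some member of $F$ is. A family $\mathcal{A} \subseteq \mathbb{N}^{\mathbb{N}}$ is a very mad family if it is an almost disjoint family of functions and for every $F \subseteq \mathbb{N}^{\mathbb{N}}$ with $|F| < |\mathcal{A}|$ that is not finitely covered by $\mathcal{A}$, there is $g \in \mathcal{A}$ such that $\{n : f(n)=g(n)\}$ is infinite for every $f \in F$. *)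

theory Defs
  imports Main "HOL-Library.Equipollence"
begin

definition almost_disjoint_family :: "(nat \<Rightarrow> nat) set \<Rightarrow> bool" where
  "almost_disjoint_family A \<longleftrightarrow>
     (\<forall>g0\<in>A. \<forall>g1\<in>A. g0 \<noteq> g1 \<longrightarrow> finite {n. g0 n = g1 n})"

definition fin_covered_fun :: "(nat \<Rightarrow> nat) \<Rightarrow> (nat \<Rightarrow> nat) set \<Rightarrow> bool" where
  "fin_covered_fun f A \<longleftrightarrow>
     (\<exists>S. S \<subseteq> A \<and> finite S \<and> S \<noteq> {} \<and> finite {k. f k \<notin> (\<lambda>g. g k) ` S})"

definition fin_covered_family :: "(nat \<Rightarrow> nat) set \<Rightarrow> (nat \<Rightarrow> nat) set \<Rightarrow> bool" where
  "fin_covered_family F A \<longleftrightarrow> (\<exists>f\<in>F. fin_covered_fun f A)"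

definition very_mad :: "(nat \<Rightarrow> nat) set \<Rightarrow> bool" where
  "very_mad A \<longleftrightarrow> almost_disjoint_family A \<and>
     (\<forall>F. F \<prec> A \<and> \<not> fin_covered_family F A \<longrightarrow>
        (\<exists>g\<in>A. \<forall>f\<in>F. infinite {n. f n = g n}))"

text \<open>A forcing notion: a nonempty carrier P with a preorder le (le q p: q extends p).\<close>
definition forcing_poset :: "'a set \<Rightarrow> ('a \<Rightarrow> 'a \<Rightarrow> bool) \<Rightarrow> bool" where
  "forcing_poset P le \<longleftrightarrow> P \<noteq> {} \<and> (\<forall>p\<in>P. le p p) \<and>
     (\<forall>p\<in>P. \<forall>q\<in>P. \<forall>r\<in>P. le p q \<and> le q r \<longrightarrow> le p r) \<and>
     (\<forall>p\<in>P. \<forall>q\<in>P. le p q \<and> le q p \<longrightarrow> p = q)"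

definition compatible :: "'a set \<Rightarrow> ('a \<Rightarrow> 'a \<Rightarrow> bool) \<Rightarrow> 'a \<Rightarrow> 'a \<Rightarrow> bool" where
  "compatible P le p q \<longleftrightarrow> (\<exists>r\<in>P. le r p \<and> le r q)"

definition antichain :: "'a set \<Rightarrow> ('a \<Rightarrow> 'a \<Rightarrow> bool) \<Rightarrow> 'a set \<Rightarrow> bool" where
  "antichain P le X \<longleftrightarrow> X \<subseteq> P \<and>
     (\<forall>p\<in>X. \<forall>q\<in>X. p \<noteq> q \<longrightarrow> \<not> compatible P le p q)"

definition ccc :: "'a set \<Rightarrow> ('a \<Rightarrow> 'a \<Rightarrow> bool) \<Rightarrow> bool" where
  "ccc P le \<longleftrightarrow> (\<forall>X. antichain P le X \<longrightarrow> countable X)"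

definition dense_in :: "'a set \<Rightarrow> ('a \<Rightarrow> 'a \<Rightarrow> bool) \<Rightarrow> 'a set \<Rightarrow> bool" where
  "dense_in P le D \<longleftrightarrow> D \<subseteq> P \<and> (\<forall>p\<in>P. \<exists>q\<in>D. le q p)"

definition is_filter :: "'a set \<Rightarrow> ('a \<Rightarrow> 'a \<Rightarrow> bool) \<Rightarrow> 'a set \<Rightarrow> bool" where
  "is_filter P le G \<longleftrightarrow> G \<subseteq> P \<and> G \<noteq> {} \<and>
     (\<forall>p\<in>G. \<forall>q\<in>P. le p q \<longrightarrow> q \<in> G) \<and>
     (\<forall>p\<in>G. \<forall>q\<in>G. \<exists>r\<in>G. le r p \<and> le r q)"

text \<open>Posets are taken with carrier inside
  the type nat set set (so all posets of size at most 2^(2^aleph0) are covered; MA for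
  posets of size at most continuum is already equivalent to full MA).\<close>
definition martins_axiom :: bool where
  "martins_axiom \<longleftrightarrow>
     (\<forall>(P :: nat set set set) le \<D>.
        forcing_poset P le \<and> ccc P le \<and> \<D> \<prec> (UNIV :: nat set set) \<and>
        (\<forall>D\<in>\<D>. dense_in P le D) \<longrightarrow>
        (\<exists>G. is_filter P le G \<and> (\<forall>D\<in>\<D>. G \<inter> D \<noteq> {})))"

end

theory Submission
  imports Defs "HOL-Library.Countable_Set_Type"
begin
unbundle cardinal_syntax

lemma lepoll_ordLeq: "A \<lesssim> B \<longleftrightarrow> |A| \<le>o |B|"
  unfolding lepoll_def card_of_ordLeq ..

lemma lesspoll_ordLess: "A \<prec> B \<longleftrightarrow> |A| <o |B|"
  unfolding lesspoll_def lepoll_ordLeq eqpoll_iff_card_of_ordIso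
  using ordLeq_iff_ordLess_or_ordIso ordLess_imp_ordLeq not_ordLess_ordIso by blast

definition enc :: "(nat \<Rightarrow> nat) \<Rightarrow> nat set" where
  "enc f = range (\<lambda>n. prod_encode (n, f n))"

lemma enc_inj: "inj enc"
proof (rule injI)
  fix f g assume e: "enc f = enc g"
  show "f = g"
  proof
    fix n
    have "prod_encode (n, f n) \<in> enc g" using e by (auto simp: enc_def)
    then obtain m where "prod_encode (n, f n) = prod_encode (m, g m)" by (auto simp: enc_def)
    then show "f n = g n" by (auto dest: inj_onD[OF inj_prod_encode, simplified])
  qed
qed

lemma fun_eqpoll: "(UNIV :: (nat \<Rightarrow> nat) set) \<approx> (UNIV :: nat set set)"
proof (rule lepoll_antisym)
  show "(UNIV :: (nat \<Rightarrow> nat) set) \<lesssim> (UNIV :: nat set set)"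
    unfolding lepoll_def using enc_inj by blast
  have "inj (\<lambda>X::nat set. (\<lambda>n. if n \<in> X then 1 else 0 :: nat))"
  proof (rule injI)
    fix X Y :: "nat set"
    assume h: "(\<lambda>n. if n \<in> X then 1 else 0 :: nat) = (\<lambda>n. if n \<in> Y then 1 else 0)"
    show "X = Y"
    proof (rule set_eqI)
      fix n from fun_cong[OF h, of n] show "n \<in> X \<longleftrightarrow> n \<in> Y" by (auto split: if_splits)
    qed
  qed
  then show "(UNIV :: nat set set) \<lesssim> (UNIV :: (nat \<Rightarrow> nat) set)"
    unfolding lepoll_def by blast
qed

lemma fun_ordIso: "|UNIV :: (nat \<Rightarrow> nat) set| =o |UNIV :: nat set set|"
  using fun_eqpoll eqpoll_iff_card_of_ordIso by blast

abbreviation WW :: "((nat \<Rightarrow> nat) \<times> (nat \<Rightarrow> nat)) set" where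
  "WW \<equiv> |UNIV :: (nat \<Rightarrow> nat) set|"

lemma small_lesspoll: "|X| <o WW \<Longrightarrow> X \<prec> (UNIV :: nat set set)"
  unfolding lesspoll_ordLess using fun_ordIso ordLess_ordIso_trans by blast

lemma WW_infinite: "infinite (UNIV :: (nat \<Rightarrow> nat) set)"
proof
  assume "finite (UNIV :: (nat \<Rightarrow> nat) set)"
  then have "finite (range (\<lambda>k::nat. (\<lambda>n::nat. k)))" by (rule finite_subset[rotated]) auto
  moreover have "inj (\<lambda>k::nat. (\<lambda>n::nat. k))" by (rule injI) meson
  ultimately show False using finite_imageD by blast
qed

lemma nat_less_WW: "|UNIV :: nat set| <o WW"
proof -
  have "|UNIV :: nat set| <o |Pow (UNIV :: nat set)|" by (rule card_of_Pow)
  then have "|UNIV :: nat set| <o |UNIV :: nat set set|" by simp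
  then show ?thesis using fun_ordIso ordIso_symmetric ordLess_ordIso_trans by blast
qed

lemma countable_less_WW: "countable X \<Longrightarrow> |X| <o WW"
  using countable_card_of_nat nat_less_WW ordLeq_ordLess_trans by blast

lemma finite_less_WW: "finite X \<Longrightarrow> |X| <o WW"
  using countable_finite countable_less_WW by blast

section \<open>Transfer of MA along an injection\<close>

lemma MA_transfer:
  fixes P :: "'a set" and e :: "'a \<Rightarrow> nat set set"
  assumes ma: martins_axiom and inj: "inj_on e P"
    and po: "forcing_poset P le" and cc: "ccc P le"
    and sm: "\<D> \<prec> (UNIV :: nat set set)" and dn: "\<forall>D\<in>\<D>. dense_in P le D"
  shows "\<exists>G. is_filter P le G \<and> (\<forall>D\<in>\<D>. G \<inter> D \<noteq> {})"
proof -
  define P' where "P' = e ` P"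
  define le' where "le' x y \<longleftrightarrow> (\<exists>p\<in>P. \<exists>q\<in>P. x = e p \<and> y = e q \<and> le p q)" for x y
  define D' where "D' = (\<lambda>D. e ` D) ` \<D>"
  have le'e: "le' (e p) (e q) \<longleftrightarrow> le p q" if "p \<in> P" "q \<in> P" for p q
    using that inj unfolding le'_def by (auto dest: inj_onD)
  have comp: "compatible P' le' (e p) (e q) \<longleftrightarrow> compatible P le p q" if "p \<in> P" "q \<in> P" for p q
    using that le'e unfolding compatible_def P'_def by auto
  have fp: "P \<noteq> {}" "\<forall>p\<in>P. le p p"
     "\<forall>p\<in>P. \<forall>q\<in>P. \<forall>r\<in>P. le p q \<and> le q r \<longrightarrow> le p r"
     "\<forall>p\<in>P. \<forall>q\<in>P. le p q \<and> le q p \<longrightarrow> p = q"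
    using po unfolding forcing_poset_def by blast+
  have po': "forcing_poset P' le'"
    unfolding forcing_poset_def
  proof (intro conjI)
    show "P' \<noteq> {}" using fp(1) by (simp add: P'_def)
    show "\<forall>p\<in>P'. le' p p" unfolding P'_def using fp(2) le'e by blast
    show "\<forall>p\<in>P'. \<forall>q\<in>P'. \<forall>r\<in>P'. le' p q \<and> le' q r \<longrightarrow> le' p r"
    proof (intro ballI impI)
      fix x y z assume "x \<in> P'" "y \<in> P'" "z \<in> P'" and h: "le' x y \<and> le' y z"
      then obtain p q r where "p\<in>P" "q\<in>P" "r\<in>P" "x = e p" "y = e q" "z = e r"
        unfolding P'_def by blast
      then show "le' x z" using h fp(3) le'e by metis
    qed
    show "\<forall>p\<in>P'. \<forall>q\<in>P'. le' p q \<and> le' q p \<longrightarrow> p = q"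
    proof (intro ballI impI)
      fix x y assume "x \<in> P'" "y \<in> P'" and h: "le' x y \<and> le' y x"
      then obtain p q where "p\<in>P" "q\<in>P" "x = e p" "y = e q"
        unfolding P'_def by blast
      then show "x = y" using h fp(4) le'e by metis
    qed
  qed
  have cc': "ccc P' le'"
    unfolding ccc_def
  proof (intro allI impI)
    fix X assume X: "antichain P' le' X"
    define Y where "Y = {p\<in>P. e p \<in> X}"
    have XY: "X = e ` Y" using X unfolding Y_def antichain_def P'_def by blast
    have "antichain P le Y"
      unfolding antichain_def
    proof (intro conjI ballI impI)
      show "Y \<subseteq> P" by (auto simp: Y_def)
      fix p q assume "p \<in> Y" "q \<in> Y" "p \<noteq> q"
      then have "e p \<noteq> e q" "e p \<in> X" "e q \<in> X" "p \<in> P" "q \<in> P"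
        using inj unfolding Y_def by (auto dest: inj_onD)
      then show "\<not> compatible P le p q" using X comp unfolding antichain_def by blast
    qed
    then have "countable Y" using cc unfolding ccc_def by blast
    then show "countable X" using XY by simp
  qed
  have sm': "D' \<prec> (UNIV :: nat set set)"
    unfolding D'_def using image_lepoll sm lesspoll_trans1 by blast
  have dn': "\<forall>D\<in>D'. dense_in P' le' D"
  proof
    fix E assume "E \<in> D'"
    then obtain D where D: "D \<in> \<D>" "E = e ` D" unfolding D'_def by blast
    then have dd: "D \<subseteq> P" "\<forall>p\<in>P. \<exists>q\<in>D. le q p" using dn unfolding dense_in_def by blast+
    show "dense_in P' le' E"
      unfolding dense_in_def
    proof (intro conjI ballI)
      show "E \<subseteq> P'" using dd D unfolding P'_def by blast
      fix x assume "x \<in> P'"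
      then obtain p where p: "p \<in> P" "x = e p" unfolding P'_def by blast
      then obtain q where "q \<in> D" "le q p" using dd by blast
      then show "\<exists>y\<in>E. le' y x" using D p dd le'e by blast
    qed
  qed
  have ma': "forcing_poset P' le' \<and> ccc P' le' \<and> D' \<prec> (UNIV :: nat set set) \<and>
        (\<forall>D\<in>D'. dense_in P' le' D) \<longrightarrow>
        (\<exists>G. is_filter P' le' G \<and> (\<forall>D\<in>D'. G \<inter> D \<noteq> {}))"
    using spec[OF spec[OF spec[OF ma[unfolded martins_axiom_def], of P'], of le'], of D'] .
  have "\<exists>G. is_filter P' le' G \<and> (\<forall>D\<in>D'. G \<inter> D \<noteq> {})"
    using ma' po' cc' sm' dn' by blast
  then obtain G' where G': "is_filter P' le' G'" "\<forall>D\<in>D'. G' \<inter> D \<noteq> {}"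
    by blast
  define G where "G = {p\<in>P. e p \<in> G'}"
  have GG: "G' \<subseteq> P'" "G' \<noteq> {}" "\<forall>p\<in>G'. \<forall>q\<in>P'. le' p q \<longrightarrow> q \<in> G'"
     "\<forall>p\<in>G'. \<forall>q\<in>G'. \<exists>r\<in>G'. le' r p \<and> le' r q"
    using G'(1) unfolding is_filter_def by blast+
  have GG': "G' = e ` G" using GG(1) unfolding G_def P'_def by blast
  have "is_filter P le G"
    unfolding is_filter_def
  proof (intro conjI ballI impI)
    show "G \<subseteq> P" by (auto simp: G_def)
    show "G \<noteq> {}" using GG(2) GG' by blast
    fix p assume p: "p \<in> G"
    { fix q assume "q \<in> P" "le p q"
      then show "q \<in> G" using p GG(3) le'e unfolding G_def P'_def by blast }
    { fix q assume q: "q \<in> G"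
      obtain r' where "r' \<in> G'" "le' r' (e p)" "le' r' (e q)" using GG(4) p q unfolding G_def by blast
      then obtain r where "r \<in> G" "le' (e r) (e p)" "le' (e r) (e q)" using GG' by blast
      then show "\<exists>r\<in>G. le r p \<and> le r q" using le'e p q unfolding G_def by blast }
  qed
  moreover have "\<forall>D\<in>\<D>. G \<inter> D \<noteq> {}"
  proof
    fix D assume D: "D \<in> \<D>"
    then have "G' \<inter> e ` D \<noteq> {}" using G'(2) unfolding D'_def by blast
    moreover have "D \<subseteq> P" using dn D unfolding dense_in_def by blast
    ultimately show "G \<inter> D \<noteq> {}" unfolding G_def by blast
  qed
  ultimately show ?thesis by blast
qed


type_synonym cond = "nat list \<times> (nat \<Rightarrow> nat) set"

definition PC :: "(nat \<Rightarrow> nat) set \<Rightarrow> cond set" where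
  "PC B = {c. finite (snd c) \<and> snd c \<subseteq> B}"

definition leC :: "((nat \<Rightarrow> nat) \<Rightarrow> nat \<Rightarrow> nat \<Rightarrow> bool) \<Rightarrow> cond \<Rightarrow> cond \<Rightarrow> bool" where
  "leC ok c d \<longleftrightarrow> (\<exists>u. fst c = fst d @ u) \<and> snd d \<subseteq> snd c \<and>
     (\<forall>k\<in>snd d. \<forall>n. length (fst d) \<le> n \<and> n < length (fst c) \<longrightarrow> ok k n (fst c ! n))"

lemma PC_iff [simp]: "(s, K) \<in> PC B \<longleftrightarrow> finite K \<and> K \<subseteq> B"
  by (simp add: PC_def)

lemma leC_iff [simp]: "leC ok (s', K') (s, K) \<longleftrightarrow> (\<exists>u. s' = s @ u) \<and> K \<subseteq> K' \<and>
     (\<forall>k\<in>K. \<forall>n. length s \<le> n \<and> n < length s' \<longrightarrow> ok k n (s' ! n))"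
  by (simp add: leC_def)

lemma PC_poset: "forcing_poset (PC B) (leC ok)"
  unfolding forcing_poset_def
proof (intro conjI ballI impI)
  show "PC B \<noteq> {}" using PC_iff[of "[]" "{}" B] by blast
next
  fix p assume "p \<in> PC B"
  obtain s K where "p = (s, K)" by fastforce
  then show "leC ok p p" by auto
next
  fix p q r assume "p \<in> PC B" "q \<in> PC B" "r \<in> PC B" and h: "leC ok p q \<and> leC ok q r"
  obtain s1 K1 where 1: "p = (s1, K1)" by fastforce
  obtain s2 K2 where 2: "q = (s2, K2)" by fastforce
  obtain s3 K3 where 3: "r = (s3, K3)" by fastforce
  from h 1 2 3 obtain u w where uw: "s1 = s2 @ u" "s2 = s3 @ w" "K2 \<subseteq> K1" "K3 \<subseteq> K2"
    and ok1: "\<forall>k\<in>K2. \<forall>n. length s2 \<le> n \<and> n < length s1 \<longrightarrow> ok k n (s1 ! n)"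
    and ok2: "\<forall>k\<in>K3. \<forall>n. length s3 \<le> n \<and> n < length s2 \<longrightarrow> ok k n (s2 ! n)"
    by auto
  have "\<forall>k\<in>K3. \<forall>n. length s3 \<le> n \<and> n < length s1 \<longrightarrow> ok k n (s1 ! n)"
  proof (intro ballI allI impI)
    fix k n assume k: "k \<in> K3" and n: "length s3 \<le> n \<and> n < length s1"
    show "ok k n (s1 ! n)"
    proof (cases "n < length s2")
      case True
      then have "s1 ! n = s2 ! n" using uw(1) by (simp add: nth_append)
      then show ?thesis using ok2 k n True by simp
    next
      case False
      then show ?thesis using ok1 k n uw(4) by auto
    qed
  qed
  then show "leC ok p r" using 1 3 uw by auto
next
  fix p q assume "p \<in> PC B" "q \<in> PC B" and h: "leC ok p q \<and> leC ok q p"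
  obtain s1 K1 where 1: "p = (s1, K1)" by fastforce
  obtain s2 K2 where 2: "q = (s2, K2)" by fastforce
  from h 1 2 obtain u w where "s1 = s2 @ u" "s2 = s1 @ w" "K1 = K2" by auto
  then show "p = q" using 1 2 by auto
qed

lemma PC_ccc: "ccc (PC B) (leC ok)"
  unfolding ccc_def
proof (intro allI impI)
  fix X assume X: "antichain (PC B) (leC ok) X"
  have "inj_on fst X"
  proof (rule inj_onI, rule ccontr)
    fix c d assume cd: "c \<in> X" "d \<in> X" "fst c = fst d" "c \<noteq> d"
    obtain s K where c: "c = (s, K)" by fastforce
    obtain L where d: "d = (s, L)" using cd(3) c by (metis prod.collapse fst_conv)
    have "c \<in> PC B" "d \<in> PC B" using X cd unfolding antichain_def by blast+
    then have "(s, K \<union> L) \<in> PC B" using c d by auto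
    moreover have "leC ok (s, K \<union> L) c" "leC ok (s, K \<union> L) d" using c d by auto
    ultimately have "compatible (PC B) (leC ok) c d" unfolding compatible_def by blast
    then show False using X cd unfolding antichain_def by blast
  qed
  moreover have "countable (fst ` X)" by simp
  ultimately show "countable X" using countable_image_inj_on by blast
qed

definition encC :: "cond \<Rightarrow> nat set set" where
  "encC c = insert {0, Suc (to_nat (fst c))} ((\<lambda>k. Suc ` enc k) ` snd c)"

lemma encC_inj: "inj encC"
proof (rule injI)
  fix c d assume h: "encC c = encC d"
  have z: "{x \<in> encC c. 0 \<in> x} = {{0, Suc (to_nat (fst c))}}" for c
    unfolding encC_def by auto
  have nz: "{x \<in> encC c. 0 \<notin> x} = (\<lambda>k. Suc ` enc k) ` snd c" for c
    unfolding encC_def by auto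
  have "{0, Suc (to_nat (fst c))} = {0, Suc (to_nat (fst d))}" using z[of c] z[of d] h by simp
  then have "Suc (to_nat (fst c)) = Suc (to_nat (fst d))" by (metis doubleton_eq_iff nat.distinct(1))
  then have f: "fst c = fst d" by simp
  have inj2: "inj (\<lambda>k. Suc ` enc k)"
    using enc_inj by (auto simp: inj_def inj_image_eq_iff)
  have "(\<lambda>k. Suc ` enc k) ` snd c = (\<lambda>k. Suc ` enc k) ` snd d" using nz[of c] nz[of d] h by simp
  then have "snd c = snd d" using inj2 by (simp add: inj_image_eq_iff)
  then show "c = d" using f by (simp add: prod_eq_iff)
qed

lemma extend_list:
  assumes E: "\<And>n. \<exists>v. \<forall>k\<in>K. ok k n v"
  shows "\<exists>u. length u = j \<and> (\<forall>k\<in>K. \<forall>i<j. ok k (m + i) (u ! i))"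
proof (induction j)
  case 0 then show ?case by simp
next
  case (Suc j)
  then obtain u where u: "length u = j" "\<forall>k\<in>K. \<forall>i<j. ok k (m + i) (u ! i)" by blast
  obtain v where v: "\<forall>k\<in>K. ok k (m + j) v" using E by blast
  have "\<forall>k\<in>K. \<forall>i<Suc j. ok k (m + i) ((u @ [v]) ! i)"
  proof (intro ballI allI impI)
    fix k i assume "k \<in> K" "i < Suc j"
    then show "ok k (m + i) ((u @ [v]) ! i)" using u v
      by (cases "i < j") (auto simp: nth_append less_Suc_eq)
  qed
  then show ?case using u by (intro exI[of _ "u @ [v]"]) simp
qed

lemma extend_cond:
  assumes E: "\<And>n. \<exists>v. \<forall>k\<in>K. ok k n v"
  shows "\<exists>u. length u = j \<and> leC ok (s @ u, K) (s, K)"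
proof -
  obtain u where u: "length u = j" "\<forall>k\<in>K. \<forall>i<j. ok k (length s + i) (u ! i)"
    using extend_list[where K=K and ok=ok and j=j and m="length s", OF E] by blast
  have "\<forall>k\<in>K. \<forall>n. length s \<le> n \<and> n < length (s @ u) \<longrightarrow> ok k n ((s @ u) ! n)"
  proof (intro ballI allI impI)
    fix k n assume k: "k \<in> K" and n: "length s \<le> n \<and> n < length (s @ u)"
    then have "n - length s < j" using u(1) by simp arith
    then have "ok k (length s + (n - length s)) (u ! (n - length s))" using u(2) k by blast
    then show "ok k n ((s @ u) ! n)" using n by (simp add: nth_append)
  qed
  then show ?thesis using u(1) by auto
qed


lemma Un_less_WW: "|X| <o WW \<Longrightarrow> |Y| <o WW \<Longrightarrow> |X \<union> Y| <o WW"
  using card_of_Un_ordLess_infinite[OF WW_infinite] by blast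

lemma times_nat_less_WW:
  fixes H :: "'a set"
  assumes "|H| <o WW" shows "|H \<times> (UNIV :: nat set)| <o WW"
proof (cases "finite H")
  case True
  then have "countable (H \<times> (UNIV :: nat set))" by (simp add: countable_finite)
  then show ?thesis by (rule countable_less_WW)
next
  case False
  have "(UNIV :: nat set) \<noteq> {}" by simp
  moreover have "|UNIV :: nat set| \<le>o |H|" using False infinite_iff_card_of_nat by blast
  ultimately have "|H \<times> (UNIV :: nat set)| =o |H|" using card_of_Times_infinite[OF False] by blast
  then show ?thesis using assms ordIso_ordLess_trans by blast
qed

lemma GEN:
  fixes B H :: "(nat \<Rightarrow> nat) set" and ok :: "(nat \<Rightarrow> nat) \<Rightarrow> nat \<Rightarrow> nat \<Rightarrow> bool"
  assumes ma: martins_axiom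
    and cB: "|B| <o WW" and cH: "|H| <o WW"
    and E: "\<And>K n. finite K \<Longrightarrow> K \<subseteq> B \<Longrightarrow> \<exists>v. \<forall>k\<in>K. ok k n v"
    and Hi: "\<And>h K m. h \<in> H \<Longrightarrow> finite K \<Longrightarrow> K \<subseteq> B \<Longrightarrow> \<exists>n\<ge>m. \<forall>k\<in>K. ok k n (h n)"
  shows "\<exists>g. (\<forall>b\<in>B. finite {n. \<not> ok b n (g n)}) \<and> (\<forall>h\<in>H. infinite {n. g n = h n})"
proof -
  define P where "P = PC B"
  define le where "le = leC ok"
  define Len where "Len m = {c\<in>P. m \<le> length (fst c)}" for m
  define Add where "Add b = {c\<in>P. b \<in> snd c}" for b
  define Hit where "Hit h m = {c\<in>P. \<exists>n. m \<le> n \<and> n < length (fst c) \<and> fst c ! n = h n}" for h m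
  define \<D> where "\<D> = Add ` B \<union> range Len \<union> (\<lambda>p. Hit (fst p) (snd p)) ` (H \<times> UNIV)"
  have dLen: "dense_in P le (Len m)" for m
    unfolding dense_in_def
  proof (intro conjI ballI)
    show "Len m \<subseteq> P" by (auto simp: Len_def)
    fix c assume c: "c \<in> P"
    obtain s K where sK: "c = (s, K)" by fastforce
    then have K: "finite K" "K \<subseteq> B" using c by (auto simp: P_def)
    obtain u where u: "length u = m" "leC ok (s @ u, K) (s, K)"
      using extend_cond[where K=K and ok=ok and j=m and s=s] E[OF K] by blast
    then have "(s @ u, K) \<in> Len m" using K by (auto simp: Len_def P_def)
    then show "\<exists>q\<in>Len m. le q c" using u sK le_def by blast
  qed
  have dAdd: "dense_in P le (Add b)" if b: "b \<in> B" for b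
    unfolding dense_in_def
  proof (intro conjI ballI)
    show "Add b \<subseteq> P" by (auto simp: Add_def)
    fix c assume c: "c \<in> P"
    obtain s K where sK: "c = (s, K)" by fastforce
    then have K: "finite K" "K \<subseteq> B" using c by (auto simp: P_def)
    have "(s, insert b K) \<in> Add b" using K b by (auto simp: Add_def P_def)
    moreover have "le (s, insert b K) c" using sK by (auto simp: le_def)
    ultimately show "\<exists>q\<in>Add b. le q c" by blast
  qed
  have dHit: "dense_in P le (Hit h m)" if h: "h \<in> H" for h m
    unfolding dense_in_def
  proof (intro conjI ballI)
    show "Hit h m \<subseteq> P" by (auto simp: Hit_def)
    fix c assume c: "c \<in> P"
    obtain s K where sK: "c = (s, K)" by fastforce
    then have K: "finite K" "K \<subseteq> B" using c by (auto simp: P_def)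
    obtain n where n: "n \<ge> max m (length s)" "\<forall>k\<in>K. ok k n (h n)"
      using Hi[OF h K, of "max m (length s)"] by blast
    obtain u where u: "length u = n - length s" "leC ok (s @ u, K) (s, K)"
      using extend_cond[where K=K and ok=ok and j="n - length s" and s=s] E[OF K] by blast
    define t where "t = s @ u @ [h n]"
    have lt: "length t = Suc n" using u(1) n(1) by (simp add: t_def)
    have lsu: "length (s @ u) = n" using u(1) n(1) by simp
    have "t ! length (s @ u) = h n" unfolding t_def by (metis append_assoc nth_append_length)
    then have tn: "t ! n = h n" using lsu by simp
    have okt: "\<forall>k\<in>K. \<forall>p. length s \<le> p \<and> p < length t \<longrightarrow> ok k p (t ! p)"
    proof (intro ballI allI impI)
      fix k p assume k: "k \<in> K" and p: "length s \<le> p \<and> p < length t"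
      show "ok k p (t ! p)"
      proof (cases "p = n")
        case True then show ?thesis using tn n(2) k by simp
      next
        case False
        then have "p < length (s @ u)" using p lt u(1) n(1) by simp
        then have "t ! p = (s @ u) ! p" unfolding t_def by (metis append_assoc nth_append)
        then show ?thesis using u(2) k p \<open>p < length (s @ u)\<close> by auto
      qed
    qed
    have "le (t, K) c" using sK okt by (auto simp: le_def t_def)
    moreover have "(t, K) \<in> Hit h m" using K n(1) lt tn by (auto simp: Hit_def P_def)
    ultimately show "\<exists>q\<in>Hit h m. le q c" by blast
  qed
  have dn: "\<forall>D\<in>\<D>. dense_in P le D"
  proof
    fix D assume "D \<in> \<D>"
    then consider (a) b where "b \<in> B" "D = Add b" | (l) m where "D = Len m"
      | (h) p where "p \<in> H \<times> UNIV" "D = Hit (fst p) (snd p)"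
      unfolding \<D>_def by blast
    then show "dense_in P le D"
    proof cases
      case a then show ?thesis using dAdd by simp
    next
      case l then show ?thesis using dLen by simp
    next
      case h then show ?thesis using dHit by auto
    qed
  qed
  have "|\<D>| <o WW"
  proof -
    have 1: "|Add ` B| <o WW" using cB card_of_image ordLeq_ordLess_trans by blast
    have 2: "|range Len| <o WW" by (rule countable_less_WW) simp
    have 3: "|(\<lambda>p. Hit (fst p) (snd p)) ` (H \<times> UNIV)| <o WW"
      using times_nat_less_WW[OF cH] card_of_image ordLeq_ordLess_trans by blast
    show ?thesis unfolding \<D>_def using 1 2 3 Un_less_WW by blast
  qed
  then have sm: "\<D> \<prec> (UNIV :: nat set set)" by (rule small_lesspoll)
  have inj: "inj_on encC (PC B)" using encC_inj inj_on_subset by blast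
  have dn': "\<forall>D\<in>\<D>. dense_in (PC B) (leC ok) D" using dn unfolding P_def le_def .
  obtain G where G: "is_filter P le G" "\<forall>D\<in>\<D>. G \<inter> D \<noteq> {}"
    using MA_transfer[OF ma inj PC_poset PC_ccc sm dn'] unfolding P_def le_def by blast
  have GP: "G \<subseteq> P" and dir: "\<forall>p\<in>G. \<forall>q\<in>G. \<exists>r\<in>G. le r p \<and> le r q"
    using G(1) unfolding is_filter_def by blast+
  have meet: "G \<inter> D \<noteq> {}" if "D \<in> \<D>" for D using G(2) that by blast
  have pre: "\<exists>u. fst r = fst c @ u" if "le r c" for r c
    using that unfolding le_def leC_def by blast
  have coh: "fst c ! n = fst d ! n" if cd: "c \<in> G" "d \<in> G" "n < length (fst c)" "n < length (fst d)" for c d n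
  proof -
    obtain r where r: "r \<in> G" "le r c" "le r d" using dir cd(1,2) by blast
    obtain u where u: "fst r = fst c @ u" using pre[OF r(2)] by blast
    obtain w where w: "fst r = fst d @ w" using pre[OF r(3)] by blast
    have "fst r ! n = fst c ! n" unfolding u using cd(3) by (simp add: nth_append)
    moreover have "fst r ! n = fst d ! n" unfolding w using cd(4) by (simp add: nth_append)
    ultimately have "fst c ! n = fst d ! n" by simp
    then show ?thesis by simp
  qed
  define g where "g n = (SOME v. \<exists>c\<in>G. n < length (fst c) \<and> fst c ! n = v)" for n
  have gval: "g n = fst c ! n" if cn: "c \<in> G" "n < length (fst c)" for c n
    unfolding g_def
    by (rule someI2[of _ "fst c ! n"]) (use cn coh in blast)+
  have lenG: "\<exists>c\<in>G. n < length (fst c)" for n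
  proof -
    have "Len (Suc n) \<in> \<D>" unfolding \<D>_def by blast
    then obtain c where c: "c \<in> G" "c \<in> Len (Suc n)" using meet by blast
    then have "n < length (fst c)" unfolding Len_def by simp
    then show ?thesis using c(1) by blast
  qed
  have partB: "finite {n. \<not> ok b n (g n)}" if b: "b \<in> B" for b
  proof -
    have "Add b \<in> \<D>" unfolding \<D>_def using b by blast
    then obtain c0 where c0: "c0 \<in> G" "b \<in> snd c0" using meet unfolding Add_def by blast
    have "{n. \<not> ok b n (g n)} \<subseteq> {..<length (fst c0)}"
    proof (rule subsetI, rule ccontr)
      fix n assume n: "n \<in> {n. \<not> ok b n (g n)}" "n \<notin> {..<length (fst c0)}"
      obtain c1 where c1: "c1 \<in> G" "n < length (fst c1)" using lenG by blast
      obtain r where r: "r \<in> G" "le r c0" "le r c1" using dir c0(1) c1(1) by blast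
      obtain w where "fst r = fst c1 @ w" using pre r(3) by blast
      then have nr: "n < length (fst r)" using c1(2) by simp
      have "\<forall>k\<in>snd c0. \<forall>n. length (fst c0) \<le> n \<and> n < length (fst r) \<longrightarrow> ok k n (fst r ! n)"
        using r(2) unfolding le_def leC_def by blast
      moreover have "length (fst c0) \<le> n" using n(2) by simp
      ultimately have "ok b n (fst r ! n)" using c0(2) nr by blast
      then show False using n(1) gval[OF r(1) nr] by simp
    qed
    then show ?thesis using finite_subset by blast
  qed
  have partH: "infinite {n. g n = h n}" if h: "h \<in> H" for h
    unfolding infinite_nat_iff_unbounded_le
  proof
    fix m :: nat
    have "(h, m) \<in> H \<times> UNIV" using h by simp
    then have "Hit (fst (h, m)) (snd (h, m)) \<in> (\<lambda>p. Hit (fst p) (snd p)) ` (H \<times> UNIV)" by (rule imageI)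
    then have "Hit h m \<in> \<D>" unfolding \<D>_def by simp
    then obtain c where c: "c \<in> G" "c \<in> Hit h m" using meet by blast
    then obtain n where "m \<le> n" "n < length (fst c)" "fst c ! n = h n" unfolding Hit_def by blast
    then show "\<exists>n\<ge>m. n \<in> {n. g n = h n}" using gval[OF c(1)] by auto
  qed
  show ?thesis using partB partH by blast
qed


lemma KEY:
  fixes A H :: "(nat \<Rightarrow> nat) set"
  assumes ma: martins_axiom and cA: "|A| <o WW" and cH: "|H| <o WW"
    and nc: "\<forall>h\<in>H. \<not> fin_covered_fun h A"
  shows "\<exists>g. (\<forall>a\<in>A. finite {n. g n = a n}) \<and> (\<forall>h\<in>H. infinite {n. g n = h n})"
proof -
  have E: "\<exists>v. \<forall>k\<in>K. v \<noteq> k n" if "finite K" "K \<subseteq> A" for K :: "(nat \<Rightarrow> nat) set" and n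
  proof -
    have "finite ((\<lambda>k. k n) ` K)" using that by simp
    then obtain v where "v \<notin> (\<lambda>k. k n) ` K" using ex_new_if_finite[OF infinite_UNIV_nat] by blast
    then show ?thesis by blast
  qed
  have Hi: "\<exists>n\<ge>m. \<forall>k\<in>K. h n \<noteq> k n" if h: "h \<in> H" and K: "finite K" "K \<subseteq> A" for h K m
  proof (cases "K = {}")
    case True then show ?thesis by blast
  next
    case False
    have "\<not> fin_covered_fun h A" using nc h by blast
    then have "infinite {k. h k \<notin> (\<lambda>g. g k) ` K}"
      using K False unfolding fin_covered_fun_def by blast
    then obtain n where "n \<ge> m" "n \<in> {k. h k \<notin> (\<lambda>g. g k) ` K}"
      unfolding infinite_nat_iff_unbounded_le by blast
    then show ?thesis by auto
  qed
  obtain g where g: "\<forall>b\<in>A. finite {n. \<not> (g n \<noteq> b n)}" "\<forall>h\<in>H. infinite {n. g n = h n}"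
    using GEN[where ok="\<lambda>k n v. v \<noteq> k n", OF ma cA cH] E Hi by blast
  then show ?thesis by auto
qed

lemma DOM:
  fixes B :: "(nat \<Rightarrow> nat) set"
  assumes ma: martins_axiom and cB: "|B| <o WW"
  shows "\<exists>h. \<forall>b\<in>B. finite {n. h n < b n}"
proof -
  have E: "\<exists>v. \<forall>k\<in>K. k n \<le> v" if "finite K" "K \<subseteq> B" for K :: "(nat \<Rightarrow> nat) set" and n
  proof -
    have "\<forall>k\<in>K. k n \<le> (\<Sum>k\<in>K. k n)"
    proof
      fix k assume "k \<in> K"
      then show "k n \<le> (\<Sum>k\<in>K. k n)" using member_le_sum[of k K "\<lambda>k. k n"] that(1) by simp
    qed
    then show ?thesis by blast
  qed
  have c0: "|{} :: (nat \<Rightarrow> nat) set| <o WW" by (rule finite_less_WW) simp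
  obtain g where g: "\<forall>b\<in>B. finite {n. \<not> (b n \<le> g n)}"
    using GEN[where ok="\<lambda>k n v. k n \<le> v" and H="{}", OF ma cB c0] E by blast
  then show ?thesis by (auto simp: not_le)
qed

lemma WW_card: "Card_order WW" by (rule card_of_Card_order)
lemma WW_field: "Field WW = UNIV" by (rule Field_card_of)
lemma WW_wo: "Well_order WW" by (rule card_of_Well_order)

lemma under_small: "|under WW k| <o WW"
proof -
  have "|underS WW k| <o WW" using card_of_underS[OF WW_card] WW_field by simp
  moreover have "|{k}| <o WW" by (rule finite_less_WW) simp
  ultimately have "|underS WW k \<union> {k}| <o WW" by (rule Un_less_WW)
  moreover have "under WW k \<subseteq> underS WW k \<union> {k}" unfolding under_def underS_def by blast
  ultimately show ?thesis using card_of_mono1 ordLeq_ordLess_trans by blast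
qed

lemma regW:
  assumes ma: martins_axiom
  shows "regularCard WW"
  unfolding regularCard_def
proof (intro allI impI)
  fix K assume K: "K \<subseteq> Field WW \<and> cofinal K WW"
  have le: "|K| \<le>o WW" using card_of_mono1[of K UNIV] by simp
  show "|K| =o WW"
  proof (rule ccontr)
    assume "\<not> |K| =o WW"
    then have lt: "|K| <o WW" using le ordLeq_iff_ordLess_or_ordIso by blast
    have "\<forall>k\<in>K. \<exists>h. \<forall>b\<in>under WW k. finite {n. h n < b n}"
      using DOM[OF ma under_small] by blast
    then obtain Hf where Hf: "\<forall>k\<in>K. \<forall>b\<in>under WW k. finite {n. Hf k n < b n}"
      by metis
    have "|Hf ` K| <o WW" using lt card_of_image ordLeq_ordLess_trans by blast
    then obtain h where h: "\<forall>b\<in>Hf ` K. finite {n. h n < b n}" using DOM[OF ma] by blast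
    define f0 where "f0 = (\<lambda>n. Suc (h n))"
    have "f0 \<in> Field WW" using WW_field by simp
    then obtain k where k: "k \<in> K" "(f0, k) \<in> WW" using K unfolding cofinal_def by blast
    have f1: "finite {n. Hf k n < f0 n}" using Hf k unfolding under_def by blast
    have f2: "finite {n. h n < Hf k n}" using h k(1) by blast
    have "UNIV \<subseteq> {n. Hf k n < f0 n} \<union> {n. h n < Hf k n}"
      unfolding f0_def by auto
    then have "finite (UNIV :: nat set)" using f1 f2 finite_subset by blast
    then show False by simp
  qed
qed

lemma fin_covered_mono: "fin_covered_fun f A \<Longrightarrow> A \<subseteq> A' \<Longrightarrow> fin_covered_fun f A'"
  unfolding fin_covered_fun_def by blast

lemma part2:
  assumes ma: martins_axiom and inf: "infinite \<A>" and vm: "very_mad \<A>"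
  shows "\<A> \<approx> (UNIV :: nat set set)"
proof -
  have "\<A> \<lesssim> (UNIV :: (nat \<Rightarrow> nat) set)" by (rule subset_imp_lepoll) simp
  then have le: "\<A> \<lesssim> (UNIV :: nat set set)" using fun_eqpoll lepoll_trans2 by blast
  show ?thesis
  proof (rule ccontr)
    assume "\<not> \<A> \<approx> (UNIV :: nat set set)"
    then have "\<A> \<prec> (UNIV :: nat set set)" using le lesspoll_def by blast
    then have "|\<A>| <o |UNIV :: nat set set|" using lesspoll_ordLess by blast
    then have cA: "|\<A>| <o WW" using fun_ordIso ordIso_symmetric ordLess_ordIso_trans by blast
    have c0: "|{} :: (nat \<Rightarrow> nat) set| <o WW" by (rule finite_less_WW) simp
    obtain g where g: "\<forall>a\<in>\<A>. finite {n. g n = a n}"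
      using KEY[OF ma cA c0] by blast
    have "\<not> fin_covered_fun g \<A>"
    proof
      assume "fin_covered_fun g \<A>"
      then obtain S where S: "S \<subseteq> \<A>" "finite S" "finite {k. g k \<notin> (\<lambda>a. a k) ` S}"
        unfolding fin_covered_fun_def by blast
      have "finite (\<Union>a\<in>S. {n. g n = a n})" using S g by blast
      moreover have "UNIV \<subseteq> {k. g k \<notin> (\<lambda>a. a k) ` S} \<union> (\<Union>a\<in>S. {n. g n = a n})" by auto
      ultimately have "finite (UNIV :: nat set)" using S(3) finite_subset by blast
      then show False by simp
    qed
    then have nc: "\<not> fin_covered_family {g} \<A>" unfolding fin_covered_family_def by blast
    have "{g} \<prec> \<A>" using finite_lesspoll_infinite[OF inf, of "{g}"] by simp
    then obtain a where "a \<in> \<A>" "infinite {n. g n = a n}"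
      using vm nc unfolding very_mad_def by blast
    then show False using g by blast
  qed
qed


definition Aset :: "((nat \<Rightarrow> nat) \<Rightarrow> (nat \<Rightarrow> nat)) \<Rightarrow> (nat \<Rightarrow> nat) \<Rightarrow> (nat \<Rightarrow> nat) set" where
  "Aset G f = G ` underS WW f"

definition Hset :: "((nat \<Rightarrow> nat) \<Rightarrow> (nat \<Rightarrow> nat)) \<Rightarrow> (nat \<Rightarrow> nat) \<Rightarrow> (nat \<Rightarrow> nat) set" where
  "Hset G f = {h. (h, f) \<in> WW \<and> \<not> fin_covered_fun h (Aset G f)}"

definition spec :: "((nat \<Rightarrow> nat) \<Rightarrow> (nat \<Rightarrow> nat)) \<Rightarrow> (nat \<Rightarrow> nat) \<Rightarrow> (nat \<Rightarrow> nat) \<Rightarrow> bool" where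
  "spec G f x \<longleftrightarrow> (\<forall>a\<in>Aset G f. finite {n. x n = a n}) \<and> (\<forall>h\<in>Hset G f. infinite {n. x n = h n})"

definition step :: "((nat \<Rightarrow> nat) \<Rightarrow> (nat \<Rightarrow> nat)) \<Rightarrow> (nat \<Rightarrow> nat) \<Rightarrow> (nat \<Rightarrow> nat)" where
  "step G f = (SOME x. spec G f x)"

definition gg :: "(nat \<Rightarrow> nat) \<Rightarrow> (nat \<Rightarrow> nat)" where
  "gg = wo_rel.worec WW step"

lemma WW_worel: "wo_rel WW" unfolding wo_rel_def by (rule WW_wo)

lemma step_adm: "wo_rel.adm_wo WW step"
  unfolding wo_rel.adm_wo_def[OF WW_worel]
proof (intro allI impI)
  fix G G' :: "(nat \<Rightarrow> nat) \<Rightarrow> (nat \<Rightarrow> nat)" and f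
  assume h: "\<forall>y\<in>underS WW f. G y = G' y"
  then have "Aset G f = Aset G' f" unfolding Aset_def by (simp cong: image_cong)
  then have "spec G f = spec G' f" unfolding spec_def Hset_def by simp
  then show "step G f = step G' f" unfolding step_def by simp
qed

lemma gg_eq: "gg f = step gg f"
  using wo_rel.worec_fixpoint[OF WW_worel step_adm] unfolding gg_def by metis

lemma gg_spec:
  assumes ma: martins_axiom
  shows "spec gg f (gg f)"
proof -
  have cA: "|Aset gg f| <o WW"
  proof -
    have "|underS WW f| <o WW" using card_of_underS[OF WW_card] WW_field by simp
    then show ?thesis unfolding Aset_def using card_of_image ordLeq_ordLess_trans by blast
  qed
  have cH: "|Hset gg f| <o WW"
  proof -
    have "Hset gg f \<subseteq> under WW f" unfolding Hset_def under_def by blast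
    then show ?thesis using under_small card_of_mono1 ordLeq_ordLess_trans by blast
  qed
  have nc: "\<forall>h\<in>Hset gg f. \<not> fin_covered_fun h (Aset gg f)" unfolding Hset_def by blast
  have "\<exists>x. spec gg f x" using KEY[OF ma cA cH nc] unfolding spec_def by blast
  then have "spec gg f (step gg f)" unfolding step_def by (rule someI_ex)
  then show ?thesis using gg_eq by simp
qed

lemma existence:
  assumes ma: martins_axiom
  shows "infinite (range gg) \<and> very_mad (range gg)"
proof -
  have TOT: "\<forall>a\<in>Field WW. \<forall>b\<in>Field WW. (a,b) \<in> WW \<or> (b,a) \<in> WW"
    using wo_rel.TOTALS[OF WW_worel] .
  have TR: "trans WW" using wo_rel.TRANS[OF WW_worel] .
  have RF: "(f, f) \<in> WW" for f
    using wo_rel.REFL[OF WW_worel] WW_field unfolding refl_on_def by blast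
  have disj: "finite {n. gg f1 n = gg f2 n}" if "f1 \<noteq> f2" for f1 f2
  proof -
    have "(f1, f2) \<in> WW \<or> (f2, f1) \<in> WW" using TOT WW_field by blast
    then show ?thesis
    proof
      assume "(f1, f2) \<in> WW"
      then have "gg f1 \<in> Aset gg f2" using that unfolding Aset_def underS_def by blast
      then have "finite {n. gg f2 n = gg f1 n}" using gg_spec[OF ma, of f2] unfolding spec_def by blast
      moreover have "{n. gg f2 n = gg f1 n} = {n. gg f1 n = gg f2 n}" by auto
      ultimately show ?thesis by simp
    next
      assume "(f2, f1) \<in> WW"
      then have "gg f2 \<in> Aset gg f1" using that unfolding Aset_def underS_def by blast
      then show "finite {n. gg f1 n = gg f2 n}" using gg_spec[OF ma, of f1] unfolding spec_def by blast
    qed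
  qed
  have injg: "inj gg"
  proof (rule injI, rule ccontr)
    fix f1 f2 assume "gg f1 = gg f2" "f1 \<noteq> f2"
    then have "finite (UNIV :: nat set)" using disj[of f1 f2] by simp
    then show False by simp
  qed
  have inf: "infinite (range gg)" using injg WW_infinite finite_imageD by blast
  have ad: "almost_disjoint_family (range gg)"
    unfolding almost_disjoint_family_def
  proof (intro ballI impI)
    fix g0 g1 assume "g0 \<in> range gg" "g1 \<in> range gg" "g0 \<noteq> g1"
    then obtain f0 f1 where "g0 = gg f0" "g1 = gg f1" "f0 \<noteq> f1" by blast
    then show "finite {n. g0 n = g1 n}" using disj by simp
  qed
  have vm: "\<forall>F. F \<prec> range gg \<and> \<not> fin_covered_family F (range gg) \<longrightarrow>
        (\<exists>g\<in>range gg. \<forall>f\<in>F. infinite {n. f n = g n})"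
  proof (intro allI impI)
    fix F assume F: "F \<prec> range gg \<and> \<not> fin_covered_family F (range gg)"
    have "|F| <o |range gg|" using F lesspoll_ordLess by blast
    moreover have "|range gg| \<le>o WW" using card_of_mono1[of "range gg" UNIV] by simp
    ultimately have cF: "|F| <o WW" using ordLess_ordLeq_trans by blast
    have rc: "relChain WW (under WW)"
      unfolding relChain_def under_def using TR by (auto dest: transD)
    have Bsub: "F \<subseteq> (\<Union>i\<in>Field WW. under WW i)"
      using RF WW_field unfolding under_def by blast
    obtain i where i: "i \<in> Field WW" "F \<subseteq> under WW i"
      using regularCard_UNION[OF WW_card regW[OF ma] rc Bsub cF] by blast
    have "\<forall>f\<in>F. infinite {n. f n = gg i n}"
    proof
      fix h assume h: "h \<in> F"
      have "\<not> fin_covered_fun h (range gg)" using F h unfolding fin_covered_family_def by blast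
      moreover have "Aset gg i \<subseteq> range gg" unfolding Aset_def by blast
      ultimately have "\<not> fin_covered_fun h (Aset gg i)" using fin_covered_mono by blast
      moreover have "(h, i) \<in> WW" using i(2) h unfolding under_def by blast
      ultimately have "h \<in> Hset gg i" unfolding Hset_def by blast
      then have "infinite {n. gg i n = h n}" using gg_spec[OF ma, of i] unfolding spec_def by blast
      moreover have "{n. gg i n = h n} = {n. h n = gg i n}" by auto
      ultimately show "infinite {n. h n = gg i n}" by simp
    qed
    then show "\<exists>g\<in>range gg. \<forall>f\<in>F. infinite {n. f n = g n}" by blast
  qed
  show ?thesis using inf ad vm unfolding very_mad_def by blast
qed

theorem mainTheorem2:
  assumes "martins_axiom"
  shows "(\<exists>\<A>. infinite \<A> \<and> very_mad \<A>) \<and>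
         (\<forall>\<A>. infinite \<A> \<and> very_mad \<A> \<longrightarrow> \<A> \<approx> (UNIV :: nat set set))"
  using existence[OF assms] part2[OF assms] by blast

end
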